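(* If $\dot G\in\mathcal C_1\cup\mathcal C_4\cup\mathcal C_5$ is a connected, non-complete, $5$-regular and $1$ net-regular SRSG with parameters $(n,5,a,b,c)$, then $(a,b)\neq(-2,1)$ and $(a,b)\neq(-2,-1)$.
   Context: A signed graph $\dot G=(G,\sigma)$ is a simple graph $G$ with $\sigma:E(G)\to\{\pm1\}$; adjacency matrix $A_{\dot G}$ has entries $\sigma(v_iv_j)$ for adjacent vertices and $0$ otherwise. Degree and connectedness refer to $G$; net-degree is $d^+(v)-d^-(v)$; $\rho$ net-regular means all net-degrees equal $\rho$. $\dot G$ on $n$ vertices is an SRSG if it is neither homogeneous complete nor edgeless and there are $r\in\mathbb N$, $a,b,c\in\mathbb Z$ with $(A^2_{\dot G})_{ii}=r$, $(A^2_{\dot G})_{ij}=a$ for positive edges, $b$ for negative edges, $c$ for distinct non-adjacent pairs; parameters $(n,r,a,b,c)$. Classes: $\mathcal C_1$: $a=-b$ and (complete, or non-complete with $c\neq0$); $\mathcal C_4$: $a\ne-b$, non-complete, $c=0$; $\mathcal C_5$: $a\neq-b$, non-complete, $c\notin\{0,\frac{a+b}{2}\}$. *)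

theory Defs
  imports Main
begin

definition signed_graph :: "'v set \<Rightarrow> ('v \<Rightarrow> 'v \<Rightarrow> bool) \<Rightarrow> ('v \<Rightarrow> 'v \<Rightarrow> int) \<Rightarrow> bool" where
  "signed_graph V E \<sigma> \<longleftrightarrow> finite V
     \<and> (\<forall>u v. E u v \<longrightarrow> u \<in> V \<and> v \<in> V \<and> u \<noteq> v)
     \<and> (\<forall>u v. E u v \<longleftrightarrow> E v u)
     \<and> (\<forall>u v. E u v \<longrightarrow> (\<sigma> u v = 1 \<or> \<sigma> u v = -1) \<and> \<sigma> u v = \<sigma> v u)"

definition sadj :: "('v \<Rightarrow> 'v \<Rightarrow> bool) \<Rightarrow> ('v \<Rightarrow> 'v \<Rightarrow> int) \<Rightarrow> 'v \<Rightarrow> 'v \<Rightarrow> int" where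
  "sadj E \<sigma> u v = (if E u v then \<sigma> u v else 0)"

definition sadj2 :: "'v set \<Rightarrow> ('v \<Rightarrow> 'v \<Rightarrow> bool) \<Rightarrow> ('v \<Rightarrow> 'v \<Rightarrow> int) \<Rightarrow> 'v \<Rightarrow> 'v \<Rightarrow> int" where
  "sadj2 V E \<sigma> u v = (\<Sum>w\<in>V. sadj E \<sigma> u w * sadj E \<sigma> w v)"

definition degree :: "'v set \<Rightarrow> ('v \<Rightarrow> 'v \<Rightarrow> bool) \<Rightarrow> 'v \<Rightarrow> nat" where
  "degree V E v = card {w \<in> V. E v w}"

definition pos_degree :: "'v set \<Rightarrow> ('v \<Rightarrow> 'v \<Rightarrow> bool) \<Rightarrow> ('v \<Rightarrow> 'v \<Rightarrow> int) \<Rightarrow> 'v \<Rightarrow> nat" where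
  "pos_degree V E \<sigma> v = card {w \<in> V. E v w \<and> \<sigma> v w = 1}"

definition neg_degree :: "'v set \<Rightarrow> ('v \<Rightarrow> 'v \<Rightarrow> bool) \<Rightarrow> ('v \<Rightarrow> 'v \<Rightarrow> int) \<Rightarrow> 'v \<Rightarrow> nat" where
  "neg_degree V E \<sigma> v = card {w \<in> V. E v w \<and> \<sigma> v w = -1}"

definition regular :: "'v set \<Rightarrow> ('v \<Rightarrow> 'v \<Rightarrow> bool) \<Rightarrow> nat \<Rightarrow> bool" where
  "regular V E r \<longleftrightarrow> (\<forall>v\<in>V. degree V E v = r)"

definition net_regular :: "'v set \<Rightarrow> ('v \<Rightarrow> 'v \<Rightarrow> bool) \<Rightarrow> ('v \<Rightarrow> 'v \<Rightarrow> int) \<Rightarrow> int \<Rightarrow> bool" where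
  "net_regular V E \<sigma> \<rho> \<longleftrightarrow>
     (\<forall>v\<in>V. int (pos_degree V E \<sigma> v) - int (neg_degree V E \<sigma> v) = \<rho>)"

definition complete_graph :: "'v set \<Rightarrow> ('v \<Rightarrow> 'v \<Rightarrow> bool) \<Rightarrow> bool" where
  "complete_graph V E \<longleftrightarrow> (\<forall>u\<in>V. \<forall>v\<in>V. u \<noteq> v \<longrightarrow> E u v)"

definition edgeless :: "('v \<Rightarrow> 'v \<Rightarrow> bool) \<Rightarrow> bool" where
  "edgeless E \<longleftrightarrow> (\<forall>u v. \<not> E u v)"

definition homogeneous :: "('v \<Rightarrow> 'v \<Rightarrow> bool) \<Rightarrow> ('v \<Rightarrow> 'v \<Rightarrow> int) \<Rightarrow> bool" where
  "homogeneous E \<sigma> \<longleftrightarrow> (\<forall>u v. E u v \<longrightarrow> \<sigma> u v = 1) \<or> (\<forall>u v. E u v \<longrightarrow> \<sigma> u v = -1)"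

definition connected_graph :: "'v set \<Rightarrow> ('v \<Rightarrow> 'v \<Rightarrow> bool) \<Rightarrow> bool" where
  "connected_graph V E \<longleftrightarrow> (\<forall>u\<in>V. \<forall>v\<in>V. E\<^sup>*\<^sup>* u v)"

definition srsg :: "'v set \<Rightarrow> ('v \<Rightarrow> 'v \<Rightarrow> bool) \<Rightarrow> ('v \<Rightarrow> 'v \<Rightarrow> int) \<Rightarrow>
    nat \<Rightarrow> nat \<Rightarrow> int \<Rightarrow> int \<Rightarrow> int \<Rightarrow> bool" where
  "srsg V E \<sigma> n r a b c \<longleftrightarrow> signed_graph V E \<sigma>
     \<and> \<not> (complete_graph V E \<and> homogeneous E \<sigma>) \<and> \<not> edgeless E
     \<and> n = card V
     \<and> (\<forall>v\<in>V. sadj2 V E \<sigma> v v = int r)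
     \<and> (\<forall>u\<in>V. \<forall>v\<in>V. E u v \<and> \<sigma> u v = 1 \<longrightarrow> sadj2 V E \<sigma> u v = a)
     \<and> (\<forall>u\<in>V. \<forall>v\<in>V. E u v \<and> \<sigma> u v = -1 \<longrightarrow> sadj2 V E \<sigma> u v = b)
     \<and> (\<forall>u\<in>V. \<forall>v\<in>V. u \<noteq> v \<and> \<not> E u v \<longrightarrow> sadj2 V E \<sigma> u v = c)"

definition class_C1 :: "'v set \<Rightarrow> ('v \<Rightarrow> 'v \<Rightarrow> bool) \<Rightarrow> int \<Rightarrow> int \<Rightarrow> int \<Rightarrow> bool" where
  "class_C1 V E a b c \<longleftrightarrow> a = - b \<and> (complete_graph V E \<or> (\<not> complete_graph V E \<and> c \<noteq> 0))"

definition class_C4 :: "'v set \<Rightarrow> ('v \<Rightarrow> 'v \<Rightarrow> bool) \<Rightarrow> int \<Rightarrow> int \<Rightarrow> int \<Rightarrow> bool" where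
  "class_C4 V E a b c \<longleftrightarrow> a \<noteq> - b \<and> \<not> complete_graph V E \<and> c = 0"

text \<open>c \<notin> {0, (a+b)/2}; the second condition is stated as 2c \<noteq> a+b.\<close>
definition class_C5 :: "'v set \<Rightarrow> ('v \<Rightarrow> 'v \<Rightarrow> bool) \<Rightarrow> int \<Rightarrow> int \<Rightarrow> int \<Rightarrow> bool" where
  "class_C5 V E a b c \<longleftrightarrow> a \<noteq> - b \<and> \<not> complete_graph V E \<and> c \<noteq> 0 \<and> 2 * c \<noteq> a + b"

end

theory Submission
  imports Defs
begin

lemma sg_facts:
  assumes "signed_graph V E \<sigma>"
  shows "finite V" "\<And>u v. E u v \<Longrightarrow> u \<in> V \<and> v \<in> V \<and> u \<noteq> v"
    "\<And>u v. E u v = E v u" "\<And>u v. E u v \<Longrightarrow> (\<sigma> u v = 1 \<or> \<sigma> u v = -1)"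
    "\<And>u v. E u v \<Longrightarrow> \<sigma> u v = \<sigma> v u"
  using assms unfolding signed_graph_def by blast+

lemma sadj_sym:
  assumes "signed_graph V E \<sigma>"
  shows "sadj E \<sigma> u w = sadj E \<sigma> w u"
  using sg_facts(3,5)[OF assms] unfolding sadj_def by (cases "E u w") auto

lemma net_sum:
  assumes sg: "signed_graph V E \<sigma>" and net: "net_regular V E \<sigma> 1" and v: "v \<in> V"
  shows "(\<Sum>w\<in>V. sadj E \<sigma> v w) = 1"
proof -
  note f = sg_facts[OF sg]
  have pw: "sadj E \<sigma> v w = of_bool (E v w \<and> \<sigma> v w = 1) - of_bool (E v w \<and> \<sigma> v w = -1)" for w
    using f(4)[of v w] unfolding sadj_def by auto
  have "(\<Sum>w\<in>V. sadj E \<sigma> v w) = (\<Sum>w\<in>V. of_bool (E v w \<and> \<sigma> v w = 1)) - (\<Sum>w\<in>V. of_bool (E v w \<and> \<sigma> v w = -1))"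
    unfolding pw by (simp add: sum_subtractf)
  also have "\<dots> = int (pos_degree V E \<sigma> v) - int (neg_degree V E \<sigma> v)"
  proof -
    have "V \<inter> {w. E v w \<and> \<sigma> v w = 1} = {w\<in>V. E v w \<and> \<sigma> v w = 1}"
         "V \<inter> {w. E v w \<and> \<sigma> v w = -1} = {w\<in>V. E v w \<and> \<sigma> v w = -1}" by auto
    then show ?thesis using f(1) unfolding pos_degree_def neg_degree_def by simp
  qed
  also have "\<dots> = 1" using net v unfolding net_regular_def by auto
  finally show ?thesis .
qed

lemma assoc2:
  "(\<Sum>w\<in>V. sadj E \<sigma> v w * sadj2 V E \<sigma> w x) = (\<Sum>w\<in>V. sadj2 V E \<sigma> v w * sadj E \<sigma> w x)"
proof -
  have "(\<Sum>w\<in>V. sadj E \<sigma> v w * sadj2 V E \<sigma> w x) = (\<Sum>w\<in>V. \<Sum>u\<in>V. sadj E \<sigma> v w * sadj E \<sigma> w u * sadj E \<sigma> u x)"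
    unfolding sadj2_def by (simp add: sum_distrib_left mult.assoc)
  also have "\<dots> = (\<Sum>u\<in>V. \<Sum>w\<in>V. sadj E \<sigma> v w * sadj E \<sigma> w u * sadj E \<sigma> u x)"
    by (rule sum.swap)
  also have "\<dots> = (\<Sum>u\<in>V. sadj2 V E \<sigma> v u * sadj E \<sigma> u x)"
    unfolding sadj2_def by (simp add: sum_distrib_right)
  finally show ?thesis .
qed


lemma two_sadj2:
  assumes sg: "signed_graph V E \<sigma>"
  and diag: "\<forall>v\<in>V. sadj2 V E \<sigma> v v = 5"
  and pos: "\<forall>u\<in>V. \<forall>v\<in>V. E u v \<and> \<sigma> u v = 1 \<longrightarrow> sadj2 V E \<sigma> u v = a"
  and neg: "\<forall>u\<in>V. \<forall>v\<in>V. E u v \<and> \<sigma> u v = -1 \<longrightarrow> sadj2 V E \<sigma> u v = b"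
  and non: "\<forall>u\<in>V. \<forall>v\<in>V. u \<noteq> v \<and> \<not> E u v \<longrightarrow> sadj2 V E \<sigma> u v = c"
  and w: "w \<in> V" and x: "x \<in> V"
  shows "2 * sadj2 V E \<sigma> w x = 2*c + (a-b) * sadj E \<sigma> w x + (a+b-2*c) * of_bool (E w x)
            + of_bool (w = x) * (10 - 2*c)"
proof -
  note f = sg_facts[OF sg]
  show ?thesis
  proof (cases "w = x")
    case True
    then have "\<not> E w x" using f(2) by blast
    then show ?thesis using True diag w unfolding sadj_def by simp
  next
    case False
    show ?thesis
    proof (cases "E w x")
      case True
      then show ?thesis using f(4)[of w x] pos neg w x False unfolding sadj_def by auto
    next
      case F2: False
      then show ?thesis using non w x False unfolding sadj_def by auto
    qed
  qed
qed


lemma cardV: "finite V \<Longrightarrow> (\<Sum>w\<in>V. of_bool (P w) :: int) = int (card {w\<in>V. P w})"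
proof -
  assume "finite V"
  moreover have "V \<inter> {w. P w} = {w\<in>V. P w}" by auto
  ultimately show ?thesis by simp
qed

lemma key:
  assumes sg: "signed_graph V E \<sigma>"
  and diag: "\<forall>v\<in>V. sadj2 V E \<sigma> v v = 5"
  and pos: "\<forall>u\<in>V. \<forall>v\<in>V. E u v \<and> \<sigma> u v = 1 \<longrightarrow> sadj2 V E \<sigma> u v = a"
  and neg: "\<forall>u\<in>V. \<forall>v\<in>V. E u v \<and> \<sigma> u v = -1 \<longrightarrow> sadj2 V E \<sigma> u v = b"
  and non: "\<forall>u\<in>V. \<forall>v\<in>V. u \<noteq> v \<and> \<not> E u v \<longrightarrow> sadj2 V E \<sigma> u v = c"
  and reg: "regular V E 5" and net: "net_regular V E \<sigma> 1"
  and a: "a = -2" and odd: "2*c \<noteq> a+b"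
  and v: "v \<in> V" and x: "x \<in> V" and vx: "E v x" "\<sigma> v x = 1"
  shows "card {w\<in>V. E v w \<and> \<sigma> v w = 1 \<and> E w x \<and> \<sigma> w x = 1} = 0 \<and>
         card {w\<in>V. E v w \<and> \<sigma> v w = 1 \<and> E w x \<and> \<sigma> w x = -1} = 1"
proof -
  note f = sg_facts[OF sg]
  define s where "s = sadj E \<sigma>"
  define e where "e = (\<lambda>u w. of_bool (E u w) :: int)"
  define T where "T = (\<Sum>w\<in>V. s v w * s w x)"
  define Sv where "Sv = (\<Sum>w\<in>V. s v w * e w x)"
  define Sx where "Sx = (\<Sum>w\<in>V. e v w * s w x)"
  define K where "K = (\<Sum>w\<in>V. e v w * e w x)"
  have sv1: "(\<Sum>w\<in>V. s v w) = 1" unfolding s_def by (rule net_sum[OF sg net v])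
  have sx1: "(\<Sum>w\<in>V. s w x) = 1" unfolding s_def
    using net_sum[OF sg net x] sadj_sym[OF sg] by simp
  have svx: "s v x = 1" using vx unfolding s_def sadj_def by simp
  have L: "2 * (\<Sum>w\<in>V. s v w * sadj2 V E \<sigma> w x) = 2*c + (a-b)*T + (a+b-2*c)*Sv + (10-2*c)"
  proof -
    have "2 * (\<Sum>w\<in>V. s v w * sadj2 V E \<sigma> w x) = (\<Sum>w\<in>V. s v w * (2 * sadj2 V E \<sigma> w x))"
      by (simp add: sum_distrib_left ac_simps)
    also have "\<dots> = (\<Sum>w\<in>V. 2*c * s v w + (a-b) * (s v w * s w x) + (a+b-2*c) * (s v w * e w x)
                     + (10-2*c) * (s v w * of_bool (w = x)))"
      by (rule sum.cong) (simp_all add: two_sadj2[OF sg diag pos neg non _ x] algebra_simps s_def e_def)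
    also have "\<dots> = 2*c * (\<Sum>w\<in>V. s v w) + (a-b)*T + (a+b-2*c)*Sv + (10-2*c) * (\<Sum>w\<in>V. s v w * of_bool (w = x))"
      by (simp add: sum.distrib sum_distrib_left T_def Sv_def)
    also have "(\<Sum>w\<in>V. s v w * of_bool (w = x)) = s v x"
    proof -
      have "V \<inter> {w. w = x} = {x}" using x by auto
      then show ?thesis using f(1) by simp
    qed
    finally show ?thesis using sv1 svx by simp
  qed
  have R: "2 * (\<Sum>w\<in>V. sadj2 V E \<sigma> v w * s w x) = 2*c + (a-b)*T + (a+b-2*c)*Sx + (10-2*c)"
  proof -
    have "2 * (\<Sum>w\<in>V. sadj2 V E \<sigma> v w * s w x) = (\<Sum>w\<in>V. (2 * sadj2 V E \<sigma> v w) * s w x)"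
      by (simp add: sum_distrib_left ac_simps)
    also have "\<dots> = (\<Sum>w\<in>V. 2*c * s w x + (a-b) * (s v w * s w x) + (a+b-2*c) * (e v w * s w x)
                     + (10-2*c) * (s w x * of_bool (v = w)))"
      by (rule sum.cong) (simp_all add: two_sadj2[OF sg diag pos neg non v] algebra_simps s_def e_def)
    also have "\<dots> = 2*c * (\<Sum>w\<in>V. s w x) + (a-b)*T + (a+b-2*c)*Sx + (10-2*c) * (\<Sum>w\<in>V. s w x * of_bool (v = w))"
      by (simp add: sum.distrib sum_distrib_left T_def Sx_def)
    also have "(\<Sum>w\<in>V. s w x * of_bool (v = w)) = s v x"
    proof -
      have "V \<inter> {w. v = w} = {v}" using v by auto
      then show ?thesis using f(1) by simp
    qed
    finally show ?thesis using sx1 svx by simp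
  qed
  have "Sv = Sx"
  proof -
    have "(a+b-2*c)*Sv = (a+b-2*c)*Sx" using L R assoc2[of E \<sigma> v V x] unfolding s_def by (simp, metis)
    moreover have "a+b-2*c \<noteq> 0" using odd by simp
    ultimately show ?thesis by simp
  qed
  have Ta: "T = a" using pos v x vx unfolding T_def s_def sadj2_def by simp
  define p where "p = card {w\<in>V. E v w \<and> \<sigma> v w = 1 \<and> E w x \<and> \<sigma> w x = 1}"
  define q where "q = card {w\<in>V. E v w \<and> \<sigma> v w = 1 \<and> E w x \<and> \<sigma> w x = -1}"
  define r where "r = card {w\<in>V. E v w \<and> \<sigma> v w = -1 \<and> E w x \<and> \<sigma> w x = 1}"
  define t where "t = card {w\<in>V. E v w \<and> \<sigma> v w = -1 \<and> E w x \<and> \<sigma> w x = -1}"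
  let ?pp = "\<lambda>w. of_bool (E v w \<and> \<sigma> v w = 1 \<and> E w x \<and> \<sigma> w x = 1) :: int"
  let ?pm = "\<lambda>w. of_bool (E v w \<and> \<sigma> v w = 1 \<and> E w x \<and> \<sigma> w x = -1) :: int"
  let ?mp = "\<lambda>w. of_bool (E v w \<and> \<sigma> v w = -1 \<and> E w x \<and> \<sigma> w x = 1) :: int"
  let ?mm = "\<lambda>w. of_bool (E v w \<and> \<sigma> v w = -1 \<and> E w x \<and> \<sigma> w x = -1) :: int"
  have spp: "(\<Sum>w\<in>V. ?pp w) = int p" unfolding p_def by (rule cardV[OF f(1)])
  have spm: "(\<Sum>w\<in>V. ?pm w) = int q" unfolding q_def by (rule cardV[OF f(1)])
  have smp: "(\<Sum>w\<in>V. ?mp w) = int r" unfolding r_def by (rule cardV[OF f(1)])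
  have smm: "(\<Sum>w\<in>V. ?mm w) = int t" unfolding t_def by (rule cardV[OF f(1)])
  have pw1: "s v w * s w x = ?pp w - ?pm w - ?mp w + ?mm w" for w
    using f(4)[of v w] f(4)[of w x] unfolding s_def sadj_def by auto
  have pw2: "s v w * e w x = ?pp w + ?pm w - ?mp w - ?mm w" for w
    using f(4)[of v w] f(4)[of w x] unfolding s_def e_def sadj_def by auto
  have pw3: "e v w * s w x = ?pp w - ?pm w + ?mp w - ?mm w" for w
    using f(4)[of v w] f(4)[of w x] unfolding s_def e_def sadj_def by auto
  have pw4: "e v w * e w x = ?pp w + ?pm w + ?mp w + ?mm w" for w
    using f(4)[of v w] f(4)[of w x] unfolding s_def e_def sadj_def by auto
  have T4: "T = int p - int q - int r + int t"
    unfolding T_def pw1 by (simp add: sum.distrib sum_subtractf spp spm smp smm)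
  have S2: "Sv = int p + int q - int r - int t"
    unfolding Sv_def pw2 by (simp add: sum.distrib sum_subtractf spp spm smp smm)
  have S3: "Sx = int p - int q + int r - int t"
    unfolding Sx_def pw3 by (simp add: sum.distrib sum_subtractf spp spm smp smm)
  have K4: "K = int p + int q + int r + int t"
    unfolding K_def pw4 by (simp add: sum.distrib spp spm smp smm)
  have Kle: "K \<le> 4"
  proof -
    have "K = int (card {w\<in>V. E v w \<and> E w x})"
      unfolding K_def e_def using cardV[OF f(1), of "\<lambda>w. E v w \<and> E w x"]
      by (simp add: of_bool_conj)
    moreover have "card {w\<in>V. E v w \<and> E w x} \<le> card ({w\<in>V. E v w} - {x})"
      by (rule card_mono) (use f in auto)
    moreover have "card ({w\<in>V. E v w} - {x}) = 4"
    proof -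
      have "card {w\<in>V. E v w} = 5" using reg v unfolding regular_def degree_def by auto
      then show ?thesis using x vx(1) by (subst card_Diff_singleton) auto
    qed
    ultimately show ?thesis by linarith
  qed
  show ?thesis using T4 S2 S3 K4 Kle Ta a \<open>Sv = Sx\<close> unfolding p_def[symmetric] q_def[symmetric]
    by presburger
qed


theorem lemma3p10:
  fixes V :: "'v set" and E :: "'v \<Rightarrow> 'v \<Rightarrow> bool" and \<sigma> :: "'v \<Rightarrow> 'v \<Rightarrow> int"
    and n :: nat and a b c :: int
  assumes "srsg V E \<sigma> n 5 a b c"
    and "class_C1 V E a b c \<or> class_C4 V E a b c \<or> class_C5 V E a b c"
    and "connected_graph V E"
    and "\<not> complete_graph V E"
    and "regular V E 5"
    and "net_regular V E \<sigma> 1"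
  shows "(a, b) \<noteq> (-2, 1) \<and> (a, b) \<noteq> (-2, -1)"
proof (rule ccontr)
  assume "\<not> ?thesis"
  then have a: "a = -2" and bb: "b = 1 \<or> b = -1" by auto
  have odd: "2*c \<noteq> a+b" using a bb by presburger
  have sg: "signed_graph V E \<sigma>" and ne: "\<not> edgeless E"
    and diag: "\<forall>v\<in>V. sadj2 V E \<sigma> v v = 5"
    and pos: "\<forall>u\<in>V. \<forall>v\<in>V. E u v \<and> \<sigma> u v = 1 \<longrightarrow> sadj2 V E \<sigma> u v = a"
    and neg: "\<forall>u\<in>V. \<forall>v\<in>V. E u v \<and> \<sigma> u v = -1 \<longrightarrow> sadj2 V E \<sigma> u v = b"
    and non: "\<forall>u\<in>V. \<forall>v\<in>V. u \<noteq> v \<and> \<not> E u v \<longrightarrow> sadj2 V E \<sigma> u v = c"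
    using assms(1) unfolding srsg_def by auto
  note f = sg_facts[OF sg]
  note K = key[OF sg diag pos neg non assms(5) assms(6) a odd]
  obtain v u where "E v u" using ne unfolding edgeless_def by blast
  then have v: "v \<in> V" using f(2) by blast
  define P where "P = {w\<in>V. E v w \<and> \<sigma> v w = 1}"
  define N where "N = {w\<in>V. E v w \<and> \<sigma> v w = -1}"
  have "card P = 3"
  proof -
    have "{w\<in>V. E v w} = P \<union> N" unfolding P_def N_def using f(4) by auto
    moreover have "P \<inter> N = {}" unfolding P_def N_def by auto
    moreover have "finite P" "finite N" unfolding P_def N_def using f(1) by auto
    ultimately have "card {w\<in>V. E v w} = card P + card N" by (simp add: card_Un_disjoint)
    moreover have "card {w\<in>V. E v w} = 5" using assms(5) v unfolding regular_def degree_def by auto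
    moreover have "int (card P) - int (card N) = 1"
      using assms(6) v unfolding net_regular_def pos_degree_def neg_degree_def P_def N_def by auto
    ultimately show ?thesis by linarith
  qed
  have uniq: "\<exists>y. {w\<in>P. E w x} = {y}" if x: "x \<in> P" for x
  proof -
    have xV: "x \<in> V" "E v x" "\<sigma> v x = 1" using x unfolding P_def by auto
    have c: "card {w\<in>V. E v w \<and> \<sigma> v w = 1 \<and> E w x \<and> \<sigma> w x = 1} = 0 \<and>
         card {w\<in>V. E v w \<and> \<sigma> v w = 1 \<and> E w x \<and> \<sigma> w x = -1} = 1"
      using K[OF v xV] .
    have "{w\<in>V. E v w \<and> \<sigma> v w = 1 \<and> E w x \<and> \<sigma> w x = 1} = {}"
      using c f(1) by simp
    then have "{w\<in>P. E w x} = {w\<in>V. E v w \<and> \<sigma> v w = 1 \<and> E w x \<and> \<sigma> w x = -1}"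
      unfolding P_def using f(4) by blast
    then show ?thesis using c by (simp add: card_1_singleton_iff)
  qed
  then obtain g where g: "\<And>x. x \<in> P \<Longrightarrow> {w\<in>P. E w x} = {g x}" by metis
  have gE: "\<And>x w. x \<in> P \<Longrightarrow> w \<in> P \<Longrightarrow> E w x \<longleftrightarrow> w = g x"
    using g by blast
  obtain x1 x2 x3 where P3: "P = {x1, x2, x3}" "x1 \<noteq> x2" "x2 \<noteq> x3" "x1 \<noteq> x3"
    using \<open>card P = 3\<close> by (auto simp: card_3_iff)
  have irr: "\<And>y. \<not> E y y" using f(2) by blast
  have "g x1 \<in> P" "g x2 \<in> P" "g x3 \<in> P" using g[of x1] g[of x2] g[of x3] P3 by blast+
  show False
    using gE[of x1 x2] gE[of x1 x3] gE[of x2 x1] gE[of x2 x3] gE[of x3 x1] gE[of x3 x2]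
      gE[of x1 x1] gE[of x2 x2] gE[of x3 x3] f(3)[of x1 x2] f(3)[of x1 x3] f(3)[of x2 x3]
      irr P3 \<open>g x1 \<in> P\<close> \<open>g x2 \<in> P\<close> \<open>g x3 \<in> P\<close> by auto
qed

end
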